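(* Let $z,z'$ be admissible with $z\ne z'$, and let $x,y>0$. Then $$K(x,y)=\frac{1}{\sqrt{xy}}\left\{\frac{\sin\pi z\cdot\sin\pi z'}{\pi\sin\pi(z-z')}\cdot\frac{(x/y)^{\frac{z-z'}2}-(x/y)^{\frac{z'-z}2}}{(x/y)^{1/2}-(x/y)^{-1/2}}+r'(x,y)\right\},$$ where, as $x,y\to0$, $r'(x,y)=O(\max\{x,y\})$ if $z'=\bar z\ne z$, and $r'(x,y)=O\big((\max\{x,y\})^{1-|z-z'|}\big)$ if $m<z,z'<m+1$ for some $m\in\mathbb Z$.
   Context: Admissible parameters: $z'=\bar z$, $z\notin\mathbb Z$, or $z,z'\in\mathbb R$ with $m<z,z'<m+1$ for some $m\in\mathbb Z$. The Whittaker kernel is $K(x,y)=\frac{1}{\Gamma(z)\Gamma(z')}\frac{\varphi_1(x)\varphi_2(y)-\varphi_1(y)\varphi_2(x)}{x-y}$ for $x,y>0$ (at $x=y$ by continuity), where $\varphi_1(x)=x^{-1/2}W_{\frac{z+z'+1}{2},\frac{z-z'}{2}}(x)$, $\varphi_2(x)=x^{-1/2}W_{\frac{z+z'-1}{2},\frac{z-z'}{2}}(x)$ and $W_{\kappa,\mu}$ is the Whittaker function. At $x=y$ the bracketed main term is understood by continuity. *)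

theory Defs
  imports "HOL-Analysis.Analysis"
begin

definition admissible :: "complex \<Rightarrow> complex \<Rightarrow> bool" where
  "admissible z z' \<longleftrightarrow>
     (z' = cnj z \<and> z \<notin> \<int>) \<or>
     (z \<in> \<real> \<and> z' \<in> \<real> \<and>
       (\<exists>m::int. of_int m < Re z \<and> Re z < of_int m + 1 \<and>
                  of_int m < Re z' \<and> Re z' < of_int m + 1))"

text \<open>Kummer's confluent hypergeometric function M(a,b,w) (b not a non-positive integer).\<close>
definition kummerM :: "complex \<Rightarrow> complex \<Rightarrow> complex \<Rightarrow> complex" where
  "kummerM a b w = (\<Sum>n. pochhammer a n / (pochhammer b n * fact n) * w ^ n)"

text \<open>Whittaker function M_{kappa,mu}(x), x > 0 (DLMF 13.14.2).\<close>
definition whittakerM :: "complex \<Rightarrow> complex \<Rightarrow> real \<Rightarrow> complex" where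
  "whittakerM \<kappa> \<mu> x =
     exp (- of_real x / 2) * of_real x powr (\<mu> + 1/2) * kummerM (1/2 + \<mu> - \<kappa>) (1 + 2*\<mu>) (of_real x)"

text \<open>Whittaker function W_{kappa,mu}(x), x > 0, via DLMF 13.14.33
  (valid whenever 2 mu is not an integer, which is the only case used below).\<close>
definition whittakerW :: "complex \<Rightarrow> complex \<Rightarrow> real \<Rightarrow> complex" where
  "whittakerW \<kappa> \<mu> x =
     Gamma (-2*\<mu>) * rGamma (1/2 - \<mu> - \<kappa>) * whittakerM \<kappa> \<mu> x
   + Gamma (2*\<mu>) * rGamma (1/2 + \<mu> - \<kappa>) * whittakerM \<kappa> (-\<mu>) x"

definition phi1 :: "complex \<Rightarrow> complex \<Rightarrow> real \<Rightarrow> complex" where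
  "phi1 z z' x = of_real x powr (-1/2) * whittakerW ((z + z' + 1)/2) ((z - z')/2) x"

definition phi2 :: "complex \<Rightarrow> complex \<Rightarrow> real \<Rightarrow> complex" where
  "phi2 z z' x = of_real x powr (-1/2) * whittakerW ((z + z' - 1)/2) ((z - z')/2) x"

definition whittaker_kernel_offdiag :: "complex \<Rightarrow> complex \<Rightarrow> real \<Rightarrow> real \<Rightarrow> complex" where
  "whittaker_kernel_offdiag z z' x y =
     rGamma z * rGamma z' *
     ((phi1 z z' x * phi2 z z' y - phi1 z z' y * phi2 z z' x) / of_real (x - y))"

definition whittaker_kernel :: "complex \<Rightarrow> complex \<Rightarrow> real \<Rightarrow> real \<Rightarrow> complex" where
  "whittaker_kernel z z' x y =
     (if x = y then Lim (at x) (\<lambda>y'. whittaker_kernel_offdiag z z' x y')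
      else whittaker_kernel_offdiag z z' x y)"

definition ratio_raw :: "complex \<Rightarrow> complex \<Rightarrow> real \<Rightarrow> complex" where
  "ratio_raw z z' t =
     (of_real t powr ((z - z')/2) - of_real t powr ((z' - z)/2)) /
     (of_real t powr (1/2) - of_real t powr (-1/2))"

definition ratio_fun :: "complex \<Rightarrow> complex \<Rightarrow> real \<Rightarrow> complex" where
  "ratio_fun z z' t = (if t = 1 then Lim (at 1) (ratio_raw z z') else ratio_raw z z' t)"

definition main_term :: "complex \<Rightarrow> complex \<Rightarrow> real \<Rightarrow> real \<Rightarrow> complex" where
  "main_term z z' x y =
     sin (of_real pi * z) * sin (of_real pi * z') / (of_real pi * sin (of_real pi * (z - z'))) * ratio_fun z z' (x / y)"

definition r_prime :: "complex \<Rightarrow> complex \<Rightarrow> real \<Rightarrow> real \<Rightarrow> complex" where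
  "r_prime z z' x y = of_real (sqrt (x * y)) * whittaker_kernel z z' x y - main_term z z' x y"

end

theory Submission
  imports Defs "HOL-Complex_Analysis.Complex_Analysis"
begin


lemma cp_exp: "0 < x \<Longrightarrow> (of_real x :: complex) powr c = exp (c * of_real (ln x))"
  by (simp add: powr_def Ln_of_real)

lemma cp_mult: "0 < x \<Longrightarrow> 0 < y \<Longrightarrow> (of_real (x*y) :: complex) powr c = of_real x powr c * of_real y powr c"
  by (simp add: cp_exp ln_mult distrib_left exp_add del: of_real_mult)

lemma cp_div: "0 < x \<Longrightarrow> 0 < y \<Longrightarrow> (of_real (x/y) :: complex) powr c = of_real x powr c / of_real y powr c"
  by (simp add: cp_exp ln_div right_diff_distrib exp_diff del: of_real_divide)

lemma cp_add: "0 < x \<Longrightarrow> (of_real x :: complex) powr (a+b) = of_real x powr a * of_real x powr b"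
  by (simp add: cp_exp distrib_right exp_add)

lemma cp_neg: "0 < x \<Longrightarrow> (of_real x :: complex) powr (-a) = 1 / of_real x powr a"
  by (simp add: cp_exp exp_minus field_simps)

lemma cp_norm: "0 < x \<Longrightarrow> norm ((of_real x :: complex) powr c) = x powr Re c"
  by (simp add: cp_exp powr_def)

lemma cp_half: "0 < x \<Longrightarrow> (of_real x :: complex) powr (1/2) = of_real (sqrt x)"
proof -
  assume x: "0 < x"
  have "(of_real x :: complex) powr (1/2) = of_real x powr (of_real (1/2))" by simp
  also have "\<dots> = of_real (x powr (1/2))" using x by (simp only: powr_of_real) 
  finally show ?thesis using x by (simp add: powr_half_sqrt)
qed

lemma cp_mhalf: "0 < x \<Longrightarrow> (of_real x :: complex) powr (-1/2) = of_real (1 / sqrt x)"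
proof -
  assume x: "0 < x"
  have "(of_real x :: complex) powr (-1/2) = of_real x powr (-(1/2))" by simp
  also have "\<dots> = 1 / of_real x powr (1/2)" using x by (rule cp_neg)
  finally show ?thesis using x by (simp add: cp_half)
qed

lemma holo_lipschitz:
  assumes "f holomorphic_on S" "open S" "compact K" "convex K" "K \<subseteq> S"
  shows "\<exists>L\<ge>0. \<forall>a\<in>K. \<forall>b\<in>K. norm (f a - f b) \<le> L * norm (a - b)"
proof -
  have "deriv f holomorphic_on S" using assms by (intro holomorphic_deriv)
  then have "continuous_on K (deriv f)"
    using assms holomorphic_on_imp_continuous_on continuous_on_subset by blast
  then have "bounded (deriv f ` K)" using assms compact_continuous_image compact_imp_bounded by blast
  then obtain B where B: "\<And>z. z \<in> K \<Longrightarrow> norm (deriv f z) \<le> B"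
    by (auto simp: bounded_iff)
  have "\<forall>a\<in>K. \<forall>b\<in>K. norm (f a - f b) \<le> max B 0 * norm (a - b)"
  proof (intro ballI)
    fix a b assume ab: "a \<in> K" "b \<in> K"
    show "norm (f a - f b) \<le> max B 0 * norm (a - b)"
    proof (rule field_differentiable_bound[OF assms(4)])
      fix z assume z: "z \<in> K"
      show "(f has_field_derivative deriv f z) (at z within K)"
        using holomorphic_derivI[OF assms(1,2)] z assms(5) by (meson has_field_derivative_at_within subsetD)
      show "norm (deriv f z) \<le> max B 0" using B[OF z] by simp
    qed (use ab in auto)
  qed
  then show ?thesis by (intro exI[of _ "max B 0"]) auto
qed

definition kc :: "complex \<Rightarrow> complex \<Rightarrow> nat \<Rightarrow> complex" where
  "kc a b n = pochhammer a n / (pochhammer b n * fact n)"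

lemma kc_Suc: "kc a b (Suc n) * w ^ Suc n = (kc a b n * w ^ n) * ((a + of_nat n) * w / ((b + of_nat n) * of_nat (Suc n)))"
  by (simp add: kc_def pochhammer_Suc fact_Suc field_simps)

lemma kc_summable: "summable (\<lambda>n. kc a b n * w ^ n)"
proof (rule summable_ratio_test[of "1/2" "nat \<lceil>norm a + 2 * norm b + 8 * norm w + 1\<rceil>"])
  fix n assume "n \<ge> nat \<lceil>norm a + 2 * norm b + 8 * norm w + 1\<rceil>"
  then have n: "real n \<ge> norm a + 2 * norm b + 8 * norm w + 1" by linarith
  have "norm (a + of_nat n) \<le> norm a + real n" using norm_triangle_ineq[of a "of_nat n"] by (simp add: norm_of_nat)
  then have na: "norm (a + of_nat n) \<le> 2 * real n"
    using n norm_ge_zero[of b] norm_ge_zero[of w] by linarith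
  have "norm (of_nat n :: complex) - norm (-b) \<le> norm (of_nat n - (-b))" by (rule norm_triangle_ineq2)
  then have "real n - norm b \<le> norm (b + of_nat n)" by (simp add: norm_of_nat add.commute)
  then have nb: "norm (b + of_nat n) \<ge> real n / 2" using n norm_ge_zero[of a] norm_ge_zero[of w] by linarith
  have npos: "real n > 0" using n by (smt (verit) norm_ge_zero)
  have "norm ((a + of_nat n) * w / ((b + of_nat n) * of_nat (Suc n))) = 
        norm (a + of_nat n) * norm w / (norm (b + of_nat n) * (real n + 1))"
    by (simp only: norm_mult norm_divide norm_of_nat) simp
  also have "\<dots> \<le> (2 * real n) * norm w / ((real n / 2) * (real n + 1))"
    by (intro frac_le mult_mono na nb mult_right_mono) (use npos in auto)
  also have "\<dots> = 4 * norm w / (real n + 1)" using npos by (simp add: divide_simps; simp add: algebra_simps)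
  also have "\<dots> \<le> 1/2"
  proof -
    have "8 * norm w \<le> real n + 1" using n norm_ge_zero[of a] norm_ge_zero[of b] by linarith
    then show ?thesis by (simp add: field_simps)
  qed
  finally have r: "norm ((a + of_nat n) * w / ((b + of_nat n) * of_nat (Suc n))) \<le> 1/2" .
  show "norm (kc a b (Suc n) * w ^ Suc n) \<le> 1/2 * norm (kc a b n * w ^ n)"
    unfolding kc_Suc norm_mult using mult_left_mono[OF r, of "norm (kc a b n * w ^ n)"]
    by (simp add: norm_mult mult.commute)
qed simp

lemma kummerM_kc: "kummerM a b = (\<lambda>w. \<Sum>n. kc a b n * w ^ n)"
  by (simp add: kummerM_def kc_def fun_eq_iff)

lemma kummerM_holo: "kummerM a b holomorphic_on S"
proof -
  have "kummerM a b field_differentiable at w" for w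
    unfolding kummerM_kc field_differentiable_def
    using termdiffs_strong_converges_everywhere[OF kc_summable] by blast
  then show ?thesis by (simp add: holomorphic_on_def field_differentiable_at_within)
qed

lemma kummerM_0: "kummerM a b 0 = 1"
  unfolding kummerM_kc powser_zero by (simp add: kc_def)

definition Fc :: "complex \<Rightarrow> complex \<Rightarrow> complex \<Rightarrow> complex" where
  "Fc a b w = exp (- w / 2) * kummerM a b w"

lemma Fc_holo: "Fc a b holomorphic_on S"
  unfolding Fc_def by (intro holomorphic_intros kummerM_holo) auto

lemma Fc_0: "Fc a b 0 = 1"
  by (simp add: Fc_def kummerM_0)

lemma Fc_lip: "\<exists>L\<ge>0. \<forall>x y. 0 \<le> x \<longrightarrow> x \<le> 1 \<longrightarrow> 0 \<le> y \<longrightarrow> y \<le> 1 \<longrightarrow>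
    norm (Fc a b (of_real x) - Fc a b (of_real y)) \<le> L * \<bar>x - y\<bar>"
proof -
  obtain L where L: "L \<ge> 0" "\<forall>u\<in>cball 0 1. \<forall>v\<in>cball 0 1. norm (Fc a b u - Fc a b v) \<le> L * norm (u - v)"
    using holo_lipschitz[OF Fc_holo open_UNIV compact_cball convex_cball subset_UNIV] by blast
  show ?thesis
  proof (intro exI[of _ L] conjI allI impI)
    fix x y :: real assume "0 \<le> x" "x \<le> 1" "0 \<le> y" "y \<le> 1"
    then have "of_real x \<in> cball (0::complex) 1" "of_real y \<in> cball (0::complex) 1" by auto
    with L(2) show "norm (Fc a b (of_real x) - Fc a b (of_real y)) \<le> L * \<bar>x - y\<bar>"
      by (metis norm_of_real of_real_diff)
  qed (use L in auto)
qed

lemma phi_repr: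
  assumes x: "0 < x"
  shows "(of_real x :: complex) powr (-1/2) * whittakerW \<kappa> m x =
    Gamma (-2*m) * rGamma (1/2 - m - \<kappa>) * of_real x powr m * Fc (1/2 + m - \<kappa>) (1 + 2*m) (of_real x)
  + Gamma (2*m) * rGamma (1/2 + m - \<kappa>) * of_real x powr (-m) * Fc (1/2 - m - \<kappa>) (1 - 2*m) (of_real x)"
proof -
  have e1: "(of_real x :: complex) powr (-1/2) * of_real x powr (m + 1/2) = of_real x powr m"
    using cp_add[OF x, of "-1/2" "m + 1/2"] by simp
  have e2: "(of_real x :: complex) powr (-1/2) * of_real x powr (-m + 1/2) = of_real x powr (-m)"
    using cp_add[OF x, of "-1/2" "-m + 1/2"] by simp
  have k: "1/2 + - m - \<kappa> = 1/2 - m - \<kappa>" "1 + 2 * - m = 1 - 2*m" by simp_all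
  show ?thesis
    unfolding whittakerW_def whittakerM_def Fc_def k e1[symmetric] e2[symmetric]
    by (simp only: distrib_left distrib_right mult_ac)
qed

lemma powr_prod_le:
  fixes x y M a b e :: real
  assumes "0 < x" "0 < y" "x \<le> M" "y \<le> M" "M \<le> 1" "0 \<le> a" "0 \<le> b" "e \<le> a + b"
  shows "x powr a * y powr b \<le> M powr e"
proof -
  have "x powr a * y powr b \<le> M powr a * M powr b"
    using assms by (intro mult_mono powr_mono2) auto
  also have "\<dots> = M powr (a + b)" by (simp add: powr_add)
  also have "\<dots> \<le> M powr e" using assms by (intro powr_mono') auto
  finally show ?thesis .
qed

lemma ratio_bound:
  fixes \<mu> :: complex
  assumes "\<bar>Re \<mu>\<bar> \<le> 1/2"
  shows "\<exists>Rb\<ge>0. \<forall>t>0. norm (of_real t powr \<mu> - of_real t powr (-\<mu>)) \<le> Rb * \<bar>sqrt t - 1 / sqrt t\<bar>"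
proof -
  define f where "f = (\<lambda>w::complex. w powr \<mu> - w powr (-\<mu>))"
  have hol: "f holomorphic_on {w. 0 < Re w}"
    unfolding f_def by (intro holomorphic_intros) (auto simp: complex_nonpos_Reals_iff)
  have sub: "cball (17/8) (15/8) \<subseteq> {w::complex. 0 < Re w}"
  proof
    fix w :: complex assume "w \<in> cball (17/8) (15/8)"
    then have "norm (17/8 - w) \<le> 15/8" by (simp add: dist_norm)
    moreover have "Re (17/8 - w) \<le> norm (17/8 - w)" by (rule complex_Re_le_cmod)
    ultimately show "w \<in> {w. 0 < Re w}" by simp
  qed
  obtain L where L: "L \<ge> 0" "\<forall>a\<in>cball (17/8) (15/8). \<forall>b\<in>cball (17/8) (15/8). norm (f a - f b) \<le> L * norm (a - b)"
    using holo_lipschitz[OF hol open_halfspace_Re_gt compact_cball convex_cball sub] by blast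
  have "\<forall>t>0. norm (of_real t powr \<mu> - of_real t powr (-\<mu>)) \<le> max 4 (2*L) * \<bar>sqrt t - 1 / sqrt t\<bar>"
  proof (intro allI impI)
    fix t :: real assume t: "0 < t"
    have st: "sqrt t > 0" using t by simp
    have n1: "norm ((of_real t :: complex) powr \<mu>) = t powr Re \<mu>" using cp_norm[OF t] .
    have n2: "norm ((of_real t :: complex) powr (-\<mu>)) = t powr (- Re \<mu>)" using cp_norm[OF t] by simp
    have tri: "norm (of_real t powr \<mu> - of_real t powr (-\<mu>)) \<le> t powr Re \<mu> + t powr (- Re \<mu>)"
      using norm_triangle_ineq4[of "(of_real t :: complex) powr \<mu>" "of_real t powr (-\<mu>)"] n1 n2 by simp
    consider "t < 1/4" | "1/4 \<le> t \<and> t \<le> 4" | "4 < t" by linarith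
    then show "norm (of_real t powr \<mu> - of_real t powr (-\<mu>)) \<le> max 4 (2*L) * \<bar>sqrt t - 1 / sqrt t\<bar>"
    proof cases
      case 1
      have a: "t powr Re \<mu> \<le> t powr (-1/2)" "t powr (- Re \<mu>) \<le> t powr (-1/2)"
        using assms t 1 by (auto intro!: powr_mono')
      have b: "t powr (-1/2) = 1 / sqrt t" using t
        by (metis minus_divide_left powr_half_sqrt powr_minus_divide less_imp_le)
      have "sqrt t < sqrt (1/4)" using 1 t by (intro real_sqrt_less_mono) auto
      then have s4: "sqrt t < 1/2" by (simp add: real_sqrt_divide)
      have "1 / sqrt t - sqrt t = (1 - t) / sqrt t" using st t
        by (simp add: field_simps del: real_sqrt_eq_iff; (metis less_imp_le real_sqrt_pow2 power2_eq_square)?)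
      moreover have "(1/2) / sqrt t \<le> (1 - t) / sqrt t" using 1 st by (intro divide_right_mono) auto
      ultimately have den: "1 / sqrt t - sqrt t \<ge> 1 / (2 * sqrt t)" by simp
      have sl: "sqrt t \<le> 1 / sqrt t"
      proof -
        have "0 < 1 / (2 * sqrt t)" using st by simp
        then show ?thesis using den by linarith
      qed
      have "norm (of_real t powr \<mu> - of_real t powr (-\<mu>)) \<le> 2 / sqrt t" using tri a b by simp
      also have "\<dots> \<le> 4 * (1 / sqrt t - sqrt t)" using mult_left_mono[OF den, of 4] by simp
      also have "\<dots> \<le> max 4 (2*L) * \<bar>sqrt t - 1 / sqrt t\<bar>"
        using sl by (intro mult_mono) (auto simp: abs_if)
      finally show ?thesis .
    next
      case 3
      have a: "t powr Re \<mu> \<le> t powr (1/2)" "t powr (- Re \<mu>) \<le> t powr (1/2)"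
        using assms t 3 by (auto intro!: powr_mono)
      have b: "t powr (1/2) = sqrt t" using t by (simp add: powr_half_sqrt)
      have "sqrt 4 < sqrt t" using 3 by (intro real_sqrt_less_mono) auto
      then have s4: "sqrt t > 2" by simp
      have A: "sqrt t - 1 / sqrt t = (t - 1) / sqrt t" using st t
        by (simp add: field_simps del: real_sqrt_eq_iff; (metis less_imp_le real_sqrt_pow2 power2_eq_square)?)
      have B: "(t/2) / sqrt t \<le> (t - 1) / sqrt t" using 3 st by (intro divide_right_mono) auto
      have C: "(t/2) / sqrt t = sqrt t / 2" using st t
        by (simp add: field_simps; (metis less_imp_le real_sqrt_pow2 power2_eq_square)?)
      have den: "sqrt t - 1 / sqrt t \<ge> sqrt t / 2" unfolding A C[symmetric] using B .
      have sl: "1 / sqrt t \<le> sqrt t" using den st by linarith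
      have "norm (of_real t powr \<mu> - of_real t powr (-\<mu>)) \<le> 2 * sqrt t" using tri a b by simp
      also have "\<dots> \<le> 4 * (sqrt t - 1 / sqrt t)" using mult_left_mono[OF den, of 4] by simp
      also have "\<dots> \<le> max 4 (2*L) * \<bar>sqrt t - 1 / sqrt t\<bar>"
        using sl by (intro mult_mono) (auto simp: abs_if)
      finally show ?thesis .
    next
      case 2
      have dd: "dist (of_real (17/8)) (of_real t :: complex) = \<bar>17/8 - t\<bar>"
        by (simp only: dist_norm of_real_diff[symmetric] norm_of_real)
      have m1: "(of_real t :: complex) \<in> cball (17/8) (15/8)" "(1::complex) \<in> cball (17/8) (15/8)"
        using 2 dd by (auto simp: dist_norm abs_if)
      have f1: "f 1 = 0" by (simp add: f_def)
      have "norm (f (of_real t) - f 1) \<le> L * norm (of_real t - (1::complex))" using L(2) m1 by blast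
      moreover have "norm (of_real t - (1::complex)) = \<bar>t - 1\<bar>" using norm_of_real[of "t - 1"] by simp
      ultimately have "norm (f (of_real t)) \<le> L * \<bar>t - 1\<bar>" using f1 by simp
      moreover have "sqrt t \<le> 2" using 2 real_sqrt_le_mono[of t 4] by simp
      moreover have "\<bar>sqrt t - 1 / sqrt t\<bar> = \<bar>t - 1\<bar> / sqrt t"
      proof -
        have "sqrt t - 1 / sqrt t = (t - 1) / sqrt t" using st t
          by (simp add: field_simps del: real_sqrt_eq_iff; (metis less_imp_le real_sqrt_pow2 power2_eq_square)?)
        then show ?thesis using st by simp
      qed
      ultimately have "\<bar>t - 1\<bar> \<le> 2 * \<bar>sqrt t - 1 / sqrt t\<bar>"
        using st by (simp add: field_simps mult_right_mono)
      then have "L * \<bar>t - 1\<bar> \<le> L * (2 * \<bar>sqrt t - 1 / sqrt t\<bar>)" using L(1) by (rule mult_left_mono)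
      with \<open>norm (f (of_real t)) \<le> L * \<bar>t - 1\<bar>\<close>
      have "norm (f (of_real t)) \<le> 2 * L * \<bar>sqrt t - 1 / sqrt t\<bar>" by simp
      also have "\<dots> \<le> max 4 (2*L) * \<bar>sqrt t - 1 / sqrt t\<bar>" by (intro mult_right_mono) auto
      finally show ?thesis by (simp add: f_def)
    qed
  qed
  then show ?thesis by (intro exI[of _ "max 4 (2*L)"]) auto
qed

definition good :: "(real \<Rightarrow> complex) \<Rightarrow> real \<Rightarrow> real \<Rightarrow> bool" where
  "good F L B \<longleftrightarrow> (\<forall>x y. 0 \<le> x \<longrightarrow> x \<le> 1 \<longrightarrow> 0 \<le> y \<longrightarrow> y \<le> 1 \<longrightarrow> norm (F x - F y) \<le> L * \<bar>x - y\<bar>)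
     \<and> (\<forall>x. 0 \<le> x \<longrightarrow> x \<le> 1 \<longrightarrow> norm (F x) \<le> B \<and> norm (F x - 1) \<le> L * x)"

lemma good_mono:
  assumes "good F L B" "L \<le> L'" "B \<le> B'"
  shows "good F L' B'"
proof -
  have "L * \<bar>x - y\<bar> \<le> L' * \<bar>x - y\<bar>" for x y using assms(2) by (intro mult_right_mono) auto
  moreover have "0 \<le> x \<Longrightarrow> L * x \<le> L' * x" for x using assms(2) by (intro mult_right_mono) auto
  ultimately show ?thesis using assms unfolding good_def by (meson order_trans)
qed

lemma good_Fc: "\<exists>L\<ge>0. \<exists>B\<ge>0. good (\<lambda>x. Fc a b (of_real x)) L B"
proof -
  obtain L where L: "L \<ge> 0" "\<forall>x y. 0 \<le> x \<longrightarrow> x \<le> 1 \<longrightarrow> 0 \<le> y \<longrightarrow> y \<le> 1 \<longrightarrow>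
    norm (Fc a b (of_real x) - Fc a b (of_real y)) \<le> L * \<bar>x - y\<bar>"
    using Fc_lip by blast
  have "good (\<lambda>x. Fc a b (of_real x)) L (1 + L)"
    unfolding good_def
  proof (intro conjI allI impI)
    fix x :: real assume x: "0 \<le> x" "x \<le> 1"
    have "norm (Fc a b (of_real x) - 1) \<le> L * \<bar>x - 0\<bar>" using L(2)[rule_format, of x 0] x by (simp add: Fc_0)
    then show e: "norm (Fc a b (of_real x) - 1) \<le> L * x" using x by simp
    have "norm (Fc a b (of_real x)) \<le> norm (Fc a b (of_real x) - 1) + 1"
      by (metis norm_one norm_triangle_ineq2 add.commute diff_le_eq)
    also have "\<dots> \<le> L * x + 1" using e by simp
    also have "\<dots> \<le> L + 1" using x L(1) by (simp add: mult_left_le)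
    finally show "norm (Fc a b (of_real x)) \<le> 1 + L" by simp
  qed (use L in auto)
  then show ?thesis using L(1) by (intro exI[of _ L] conjI exI[of _ "1+L"]) auto
qed

lemma good_prod_lip:
  assumes "good f L B" "good g L B" "0 \<le> x" "x \<le> 1" "0 \<le> y" "y \<le> 1"
  shows "norm (f x * g y - f y * g x) \<le> 2 * L * B * \<bar>x - y\<bar>"
proof -
  have d1: "norm (f x - f y) \<le> L * \<bar>x - y\<bar>" "norm (g y - g x) \<le> L * \<bar>y - x\<bar>"
    "norm (g y) \<le> B" "norm (f y) \<le> B"
    using assms unfolding good_def by blast+
  have L0: "0 \<le> L * \<bar>x - y\<bar>" "0 \<le> B" using d1 norm_ge_zero order_trans by metis+
  have "f x * g y - f y * g x = (f x - f y) * g y + f y * (g y - g x)" by (simp add: algebra_simps)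
  then have "norm (f x * g y - f y * g x) \<le> norm (f x - f y) * norm (g y) + norm (f y) * norm (g y - g x)"
    by (metis norm_mult norm_triangle_ineq)
  also have "\<dots> \<le> (L * \<bar>x - y\<bar>) * B + B * (L * \<bar>y - x\<bar>)"
    using d1 L0 by (intro add_mono mult_mono) (auto simp: abs_minus_commute)
  also have "\<dots> = 2 * L * B * \<bar>x - y\<bar>" by (simp add: abs_minus_commute algebra_simps)
  finally show ?thesis .
qed

lemma good_prod_one:
  assumes "good f L B" "good g L B" "0 \<le> x" "x \<le> 1" "0 \<le> y" "y \<le> 1" "x \<le> M" "y \<le> M" "0 \<le> L" "0 \<le> B"
  shows "norm (f y * g x - 1) \<le> (L * B + L) * M"
proof -
  have "f y * g x - 1 = (f y - 1) * g x + (g x - 1)" by (simp add: algebra_simps)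
  then have "norm (f y * g x - 1) \<le> norm (f y - 1) * norm (g x) + norm (g x - 1)"
    by (metis norm_mult norm_triangle_ineq)
  also have "\<dots> \<le> (L * M) * B + L * M"
  proof -
    have d: "norm (f y - 1) \<le> L * y" "norm (g x - 1) \<le> L * x" "norm (g x) \<le> B"
      using assms unfolding good_def by blast+
    have "L * y \<le> L * M" "L * x \<le> L * M" using assms by (auto intro: mult_left_mono)
    with d show ?thesis using assms by (intro add_mono mult_mono) auto
  qed
  also have "\<dots> = (L * B + L) * M" by (simp add: algebra_simps)
  finally show ?thesis .
qed

lemma sqrt_prod_powr: "0 < x \<Longrightarrow> 0 < y \<Longrightarrow> sqrt (x * y) * (x powr a * y powr b) = x powr (1/2 + a) * y powr (1/2 + b)"
  by (simp add: powr_add powr_half_sqrt real_sqrt_mult)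

lemma tb1:
  fixes x y M K \<alpha> \<beta> e :: real and pp D :: complex
  assumes "0 < x" "0 < y" "x \<noteq> y" "x \<le> M" "y \<le> M" "M \<le> 1"
    "norm D \<le> K * \<bar>x - y\<bar>" "norm pp = x powr \<alpha> * y powr \<beta>"
    "0 \<le> 1/2 + \<alpha>" "0 \<le> 1/2 + \<beta>" "e \<le> 1 + \<alpha> + \<beta>"
  shows "norm (of_real (sqrt (x*y) / (x - y)) * (pp * D)) \<le> K * M powr e"
proof -
  have xy: "\<bar>x - y\<bar> > 0" using assms by simp
  have K0: "K \<ge> 0" using assms(7) xy by (smt (verit) norm_ge_zero zero_le_mult_iff)
  have "norm (of_real (sqrt (x*y) / (x - y)) * (pp * D)) = sqrt (x*y) / \<bar>x - y\<bar> * (x powr \<alpha> * y powr \<beta>) * norm D"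
    by (simp only: norm_mult norm_of_real) (use assms(1,2) in \<open>simp add: abs_divide assms(8)\<close>)
  also have "\<dots> \<le> sqrt (x*y) / \<bar>x - y\<bar> * (x powr \<alpha> * y powr \<beta>) * (K * \<bar>x - y\<bar>)"
    using assms by (intro mult_left_mono) auto
  also have "\<dots> = K * (sqrt (x*y) * (x powr \<alpha> * y powr \<beta>))" using xy by (simp add: field_simps)
  also have "\<dots> = K * (x powr (1/2 + \<alpha>) * y powr (1/2 + \<beta>))" using assms by (simp add: sqrt_prod_powr)
  also have "\<dots> \<le> K * M powr e"
    using assms K0 by (intro mult_left_mono powr_prod_le) auto
  finally show ?thesis .
qed

lemma tb2:
  fixes x y M K Rb e :: real and W H :: complex
  assumes "0 < x" "0 < y" "x \<noteq> y" "0 < M" "M \<le> 1" "e \<le> 1"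
    "norm W \<le> Rb * (\<bar>x - y\<bar> / sqrt (x*y))" "norm H \<le> K * M" "0 \<le> Rb" "0 \<le> K"
  shows "norm (of_real (sqrt (x*y) / (x - y)) * (W * H)) \<le> Rb * K * M powr e"
proof -
  have xy: "\<bar>x - y\<bar> > 0" using assms by simp
  have s: "sqrt (x*y) > 0" using assms by simp
  have "norm (of_real (sqrt (x*y) / (x - y)) * (W * H)) = (sqrt (x*y) / \<bar>x - y\<bar> * norm W) * norm H"
    by (simp only: norm_mult norm_of_real) (use assms(1,2) in \<open>simp add: abs_divide\<close>)
  also have "\<dots> \<le> (sqrt (x*y) / \<bar>x - y\<bar> * (Rb * (\<bar>x - y\<bar> / sqrt (x*y)))) * (K * M)"
    using assms s xy by (intro mult_mono mult_left_mono) auto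
  also have "\<dots> = Rb * K * M" using xy s assms(1,2) by (simp add: field_simps)
  also have "\<dots> \<le> Rb * K * M powr e"
  proof -
    have "M powr 1 \<le> M powr e" using assms by (intro powr_mono') auto
    then show ?thesis using assms by (intro mult_left_mono) auto
  qed
  finally show ?thesis .
qed

lemma sq_id: "0 < x \<Longrightarrow> 0 < y \<Longrightarrow> sqrt (x/y) - 1 / sqrt (x/y) = (x - y) / sqrt (x*y)"
proof -
  assume x: "0 < x" and y: "0 < y"
  have sx: "sqrt x > 0" "sqrt y > 0" using x y by auto
  have "sqrt (x/y) - 1 / sqrt (x/y) = sqrt x / sqrt y - sqrt y / sqrt x" by (simp add: real_sqrt_divide)
  also have "\<dots> = (sqrt x * sqrt x - sqrt y * sqrt y) / (sqrt x * sqrt y)" using sx by (simp add: field_simps)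
  also have "\<dots> = (x - y) / sqrt (x*y)" using x y by (simp add: real_sqrt_mult)
  finally show ?thesis .
qed

lemma phi1_repr:
  assumes x: "0 < x"
  shows "phi1 z z' x = Gamma (z' - z) * rGamma (-z) * of_real x powr ((z - z')/2) * Fc (-z') (1 + (z - z')) (of_real x)
    + Gamma (z - z') * rGamma (-z') * of_real x powr (-((z - z')/2)) * Fc (-z) (1 - (z - z')) (of_real x)"
proof -
  have e: "-2*((z-z')/2) = z'-z" "1/2 - (z-z')/2 - (z+z'+1)/2 = -z" "1/2 + (z-z')/2 - (z+z'+1)/2 = -z'"
     "2*((z-z')/2) = z - z'" by (simp_all add: field_simps)
  show ?thesis unfolding phi1_def phi_repr[OF x] e ..
qed

lemma phi2_repr:
  assumes x: "0 < x"
  shows "phi2 z z' x = Gamma (z' - z) * rGamma (1 - z) * of_real x powr ((z - z')/2) * Fc (1 - z') (1 + (z - z')) (of_real x)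
    + Gamma (z - z') * rGamma (1 - z') * of_real x powr (-((z - z')/2)) * Fc (1 - z) (1 - (z - z')) (of_real x)"
proof -
  have e: "-2*((z-z')/2) = z'-z" "1/2 - (z-z')/2 - (z+z'-1)/2 = 1 - z" "1/2 + (z-z')/2 - (z+z'-1)/2 = 1 - z'"
     "2*((z-z')/2) = z - z'" by (simp_all add: field_simps)
  show ?thesis unfolding phi2_def phi_repr[OF x] e ..
qed

lemma key_alg:
  fixes A1 B1 A2 B2 px py qx qy F1x F1y G1x G1y F2x F2y G2x G2y :: complex
  shows "(A1*px*F1x + B1*qx*G1x)*(A2*py*F2y + B2*qy*G2y) - (A1*py*F1y + B1*qy*G1y)*(A2*px*F2x + B2*qx*G2x)
      - (A1*B2 - B1*A2)*(px*qy - qx*py)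
   = px*py*(A1*A2*(F1x*F2y - F1y*F2x)) + qx*qy*(B1*B2*(G1x*G2y - G1y*G2x))
     + px*qy*(A1*B2*(F1x*G2y - F1y*G2x)) + (px*qy - py*qx)*(A1*B2*(F1y*G2x - 1))
     + qx*py*(B1*A2*(G1x*F2y - G1y*F2x)) + (qx*py - qy*px)*(B1*A2*(G1y*F2x - 1))"
  by algebra

lemma ratio_raw_eq:
  assumes x: "0 < x" and y: "0 < y" and xy: "x \<noteq> y"
  shows "ratio_raw z z' (x/y) = of_real (sqrt (x*y) / (x - y)) *
    (of_real x powr ((z-z')/2) * of_real y powr (-((z-z')/2)) - of_real x powr (-((z-z')/2)) * of_real y powr ((z-z')/2))"
proof -
  have t: "0 < x/y" using x y by simp
  have m: "(z' - z)/2 = -((z-z')/2)" by (simp add: field_simps)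
  have d: "(of_real (x/y) :: complex) powr (1/2) - of_real (x/y) powr (-1/2) = of_real ((x - y) / sqrt (x*y))"
    unfolding cp_half[OF t] cp_mhalf[OF t] sq_id[OF x y, symmetric] by simp
  have n1: "(of_real (x/y) :: complex) powr c = of_real x powr c * of_real y powr (-c)" for c
    using cp_div[OF x y, of c] cp_neg[OF y, of c] by simp
  have nz: "(x - y) / sqrt (x*y) \<noteq> 0" using x y xy by simp
  have r: "ratio_raw z z' (x/y) = (of_real (x/y) powr ((z-z')/2) - of_real (x/y) powr (-((z-z')/2))) / of_real ((x-y) / sqrt (x*y))"
    unfolding ratio_raw_def d m ..
  have sx: "sqrt (x*y) \<noteq> 0" using x y by simp
  have iv: "(of_real ((x-y) / sqrt (x*y)) :: complex) = inverse (of_real (sqrt (x*y) / (x - y)))"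
    by (simp only: of_real_inverse[symmetric] inverse_divide)
  show ?thesis unfolding r n1[of "(z-z')/2"] n1[of "-((z-z')/2)"] minus_minus iv
    by (simp only: divide_inverse inverse_inverse_eq mult.commute)
qed

lemma core_bound:
  fixes z z' :: complex
  defines "\<rho> \<equiv> Re ((z - z')/2)"
  defines "A1 \<equiv> Gamma (z' - z) * rGamma (-z)" and "B1 \<equiv> Gamma (z - z') * rGamma (-z')"
      and "A2 \<equiv> Gamma (z' - z) * rGamma (1 - z)" and "B2 \<equiv> Gamma (z - z') * rGamma (1 - z')"
  assumes rho: "\<bar>\<rho>\<bar> \<le> 1/2"
  shows "\<exists>C. \<forall>x y. 0 < x \<longrightarrow> x < 1 \<longrightarrow> 0 < y \<longrightarrow> y < 1 \<longrightarrow> x \<noteq> y \<longrightarrow>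
     norm (of_real (sqrt (x*y)) * whittaker_kernel_offdiag z z' x y
        - rGamma z * rGamma z' * (A1*B2 - B1*A2) * ratio_raw z z' (x/y))
     \<le> C * max x y powr (1 - 2*\<bar>\<rho>\<bar>)"
proof -
  define \<mu> where "\<mu> = (z - z')/2"
  define F1 where "F1 = (\<lambda>x::real. Fc (-z') (1 + (z - z')) (of_real x))"
  define G1 where "G1 = (\<lambda>x::real. Fc (-z) (1 - (z - z')) (of_real x))"
  define F2 where "F2 = (\<lambda>x::real. Fc (1-z') (1 + (z - z')) (of_real x))"
  define G2 where "G2 = (\<lambda>x::real. Fc (1-z) (1 - (z - z')) (of_real x))"
  define c0 where "c0 = rGamma z * rGamma z'"
  obtain L1 B1' where g1: "L1 \<ge> 0" "B1' \<ge> 0" "good F1 L1 B1'" unfolding F1_def using good_Fc by blast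
  obtain L2 B2' where g2: "L2 \<ge> 0" "B2' \<ge> 0" "good G1 L2 B2'" unfolding G1_def using good_Fc by blast
  obtain L3 B3' where g3: "L3 \<ge> 0" "B3' \<ge> 0" "good F2 L3 B3'" unfolding F2_def using good_Fc by blast
  obtain L4 B4' where g4: "L4 \<ge> 0" "B4' \<ge> 0" "good G2 L4 B4'" unfolding G2_def using good_Fc by blast
  define L where "L = L1 + L2 + L3 + L4"
  define B where "B = B1' + B2' + B3' + B4'"
  have L0: "L \<ge> 0" and B0: "B \<ge> 0" using g1 g2 g3 g4 by (auto simp: L_def B_def)
  have gF1: "good F1 L B" by (rule good_mono[OF g1(3)]) (use g1 g2 g3 g4 in \<open>auto simp: L_def B_def\<close>)
  have gG1: "good G1 L B" by (rule good_mono[OF g2(3)]) (use g1 g2 g3 g4 in \<open>auto simp: L_def B_def\<close>)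
  have gF2: "good F2 L B" by (rule good_mono[OF g3(3)]) (use g1 g2 g3 g4 in \<open>auto simp: L_def B_def\<close>)
  have gG2: "good G2 L B" by (rule good_mono[OF g4(3)]) (use g1 g2 g3 g4 in \<open>auto simp: L_def B_def\<close>)
  have rmu: "\<bar>Re \<mu>\<bar> \<le> 1/2" using rho by (simp add: \<mu>_def \<rho>_def)
  obtain Rb where Rb: "Rb \<ge> 0" "\<forall>t>0. norm (of_real t powr \<mu> - of_real t powr (-\<mu>)) \<le> Rb * \<bar>sqrt t - 1 / sqrt t\<bar>"
    using ratio_bound[OF rmu] by blast
  define C where "C = norm c0 * (norm (A1*A2) * (2*L*B) + norm (B1*B2) * (2*L*B) + norm (A1*B2) * (2*L*B)
     + Rb * (norm (A1*B2) * (L*B + L)) + norm (B1*A2) * (2*L*B) + Rb * (norm (B1*A2) * (L*B + L)))"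
  show ?thesis
  proof (intro exI[of _ C] allI impI)
    fix x y :: real assume x: "0 < x" "x < 1" and y: "0 < y" "y < 1" and xy: "x \<noteq> y"
    define M where "M = max x y"
    define e where "e = 1 - 2*\<bar>\<rho>\<bar>"
    have M: "x \<le> M" "y \<le> M" "0 < M" "M \<le> 1" using x y by (auto simp: M_def)
    define px where "px = (of_real x :: complex) powr \<mu>"
    define py where "py = (of_real y :: complex) powr \<mu>"
    define qx where "qx = (of_real x :: complex) powr (-\<mu>)"
    define qy where "qy = (of_real y :: complex) powr (-\<mu>)"
    define u where "u = (of_real (sqrt (x*y) / (x - y)) :: complex)"
    have p1: "phi1 z z' x = A1 * px * F1 x + B1 * qx * G1 x" "phi1 z z' y = A1 * py * F1 y + B1 * qy * G1 y"
      using phi1_repr[OF x(1), of z z'] phi1_repr[OF y(1), of z z']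
      by (simp_all add: A1_def B1_def px_def qx_def py_def qy_def F1_def G1_def \<mu>_def)
    have p2: "phi2 z z' x = A2 * px * F2 x + B2 * qx * G2 x" "phi2 z z' y = A2 * py * F2 y + B2 * qy * G2 y"
      using phi2_repr[OF x(1), of z z'] phi2_repr[OF y(1), of z z']
      by (simp_all add: A2_def B2_def px_def qx_def py_def qy_def F2_def G2_def \<mu>_def)
    have rr: "ratio_raw z z' (x/y) = u * (px * qy - qx * py)"
      using ratio_raw_eq[OF x(1) y(1) xy, of z z'] by (simp add: u_def px_def py_def qx_def qy_def \<mu>_def)
    have kk: "of_real (sqrt (x*y)) * whittaker_kernel_offdiag z z' x y =
        c0 * (u * (phi1 z z' x * phi2 z z' y - phi1 z z' y * phi2 z z' x))"
      unfolding whittaker_kernel_offdiag_def c0_def u_def by (simp add: field_simps)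
    have ident: "of_real (sqrt (x*y)) * whittaker_kernel_offdiag z z' x y
        - rGamma z * rGamma z' * (A1*B2 - B1*A2) * ratio_raw z z' (x/y)
      = c0 * (u * (px*py*(A1*A2*(F1 x*F2 y - F1 y*F2 x))) + u * (qx*qy*(B1*B2*(G1 x*G2 y - G1 y*G2 x)))
         + u * (px*qy*(A1*B2*(F1 x*G2 y - F1 y*G2 x))) + u * ((px*qy - py*qx)*(A1*B2*(F1 y*G2 x - 1)))
         + u * (qx*py*(B1*A2*(G1 x*F2 y - G1 y*F2 x))) + u * ((qx*py - qy*px)*(B1*A2*(G1 y*F2 x - 1))))"
    proof -
      have "of_real (sqrt (x*y)) * whittaker_kernel_offdiag z z' x y
        - rGamma z * rGamma z' * (A1*B2 - B1*A2) * ratio_raw z z' (x/y)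
        = c0 * (u * ((A1*px*F1 x + B1*qx*G1 x)*(A2*py*F2 y + B2*qy*G2 y) - (A1*py*F1 y + B1*qy*G1 y)*(A2*px*F2 x + B2*qx*G2 x)
              - (A1*B2 - B1*A2)*(px*qy - qx*py)))"
        unfolding kk rr p1 p2 c0_def by (simp add: algebra_simps)
      also have "\<dots> = c0 * (u * (px*py*(A1*A2*(F1 x*F2 y - F1 y*F2 x)) + qx*qy*(B1*B2*(G1 x*G2 y - G1 y*G2 x))
         + px*qy*(A1*B2*(F1 x*G2 y - F1 y*G2 x)) + (px*qy - py*qx)*(A1*B2*(F1 y*G2 x - 1))
         + qx*py*(B1*A2*(G1 x*F2 y - G1 y*F2 x)) + (qx*py - qy*px)*(B1*A2*(G1 y*F2 x - 1))))"
        unfolding key_alg ..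
      also have "\<dots> = c0 * (u * (px*py*(A1*A2*(F1 x*F2 y - F1 y*F2 x))) + u * (qx*qy*(B1*B2*(G1 x*G2 y - G1 y*G2 x)))
         + u * (px*qy*(A1*B2*(F1 x*G2 y - F1 y*G2 x))) + u * ((px*qy - py*qx)*(A1*B2*(F1 y*G2 x - 1)))
         + u * (qx*py*(B1*A2*(G1 x*F2 y - G1 y*F2 x))) + u * ((qx*py - qy*px)*(B1*A2*(G1 y*F2 x - 1))))"
        by (simp only: distrib_left)
      finally show ?thesis .
    qed
    have npx: "norm px = x powr \<rho>" "norm qx = x powr (-\<rho>)" "norm py = y powr \<rho>" "norm qy = y powr (-\<rho>)"
      using cp_norm[OF x(1)] cp_norm[OF y(1)] by (simp_all add: px_def qx_def py_def qy_def \<rho>_def \<mu>_def)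
    have W1: "norm (px*qy - py*qx) \<le> Rb * (\<bar>x - y\<bar> / sqrt (x*y))"
    proof -
      have t: "0 < x/y" using x y by simp
      have "px*qy = of_real (x/y) powr \<mu>" "py*qx = of_real (x/y) powr (-\<mu>)"
        using cp_div[OF x(1) y(1), of \<mu>] cp_neg[OF y(1), of \<mu>] cp_div[OF x(1) y(1), of "-\<mu>"] cp_neg[OF x(1), of \<mu>]
        by (simp_all add: px_def py_def qx_def qy_def field_simps)
      moreover have "\<bar>sqrt (x/y) - 1 / sqrt (x/y)\<bar> = \<bar>x - y\<bar> / sqrt (x*y)"
        unfolding sq_id[OF x(1) y(1)] using x y by (simp add: abs_divide)
      ultimately show ?thesis using Rb(2) t by metis
    qed
    have W2: "norm (qx*py - qy*px) \<le> Rb * (\<bar>x - y\<bar> / sqrt (x*y))"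
      using W1 by (simp add: norm_minus_commute mult.commute)
    have b1: "norm (u * (px*py*(A1*A2*(F1 x*F2 y - F1 y*F2 x)))) \<le> norm (A1*A2) * (2*L*B) * M powr e"
      unfolding u_def
    proof (rule tb1[OF x(1) y(1) xy M(1,2,4)])
      show "norm (A1*A2*(F1 x*F2 y - F1 y*F2 x)) \<le> norm (A1*A2) * (2*L*B) * \<bar>x - y\<bar>"
        using good_prod_lip[OF gF1 gF2, of x y] x y by (simp add: norm_mult mult_left_mono mult.assoc)
      show "norm (px*py) = x powr \<rho> * y powr \<rho>" by (simp add: norm_mult npx)
    qed (use rho in \<open>auto simp: e_def\<close>)
    have b2: "norm (u * (qx*qy*(B1*B2*(G1 x*G2 y - G1 y*G2 x)))) \<le> norm (B1*B2) * (2*L*B) * M powr e"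
      unfolding u_def
    proof (rule tb1[OF x(1) y(1) xy M(1,2,4)])
      show "norm (B1*B2*(G1 x*G2 y - G1 y*G2 x)) \<le> norm (B1*B2) * (2*L*B) * \<bar>x - y\<bar>"
        using good_prod_lip[OF gG1 gG2, of x y] x y by (simp add: norm_mult mult_left_mono mult.assoc)
      show "norm (qx*qy) = x powr (-\<rho>) * y powr (-\<rho>)" by (simp add: norm_mult npx)
    qed (use rho in \<open>auto simp: e_def\<close>)
    have b3: "norm (u * (px*qy*(A1*B2*(F1 x*G2 y - F1 y*G2 x)))) \<le> norm (A1*B2) * (2*L*B) * M powr e"
      unfolding u_def
    proof (rule tb1[OF x(1) y(1) xy M(1,2,4)])
      show "norm (A1*B2*(F1 x*G2 y - F1 y*G2 x)) \<le> norm (A1*B2) * (2*L*B) * \<bar>x - y\<bar>"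
        using good_prod_lip[OF gF1 gG2, of x y] x y by (simp add: norm_mult mult_left_mono mult.assoc)
      show "norm (px*qy) = x powr \<rho> * y powr (-\<rho>)" by (simp add: norm_mult npx)
    qed (use rho in \<open>auto simp: e_def\<close>)
    have b5: "norm (u * (qx*py*(B1*A2*(G1 x*F2 y - G1 y*F2 x)))) \<le> norm (B1*A2) * (2*L*B) * M powr e"
      unfolding u_def
    proof (rule tb1[OF x(1) y(1) xy M(1,2,4)])
      show "norm (B1*A2*(G1 x*F2 y - G1 y*F2 x)) \<le> norm (B1*A2) * (2*L*B) * \<bar>x - y\<bar>"
        using good_prod_lip[OF gG1 gF2, of x y] x y by (simp add: norm_mult mult_left_mono mult.assoc)
      show "norm (qx*py) = x powr (-\<rho>) * y powr \<rho>" by (simp add: norm_mult npx)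
    qed (use rho in \<open>auto simp: e_def\<close>)
    have b4: "norm (u * ((px*qy - py*qx)*(A1*B2*(F1 y*G2 x - 1)))) \<le> Rb * (norm (A1*B2) * (L*B + L)) * M powr e"
      unfolding u_def
    proof (rule tb2[OF x(1) y(1) xy M(3,4) _ W1 _ Rb(1)])
      show "norm (A1*B2*(F1 y*G2 x - 1)) \<le> norm (A1*B2) * (L*B + L) * M"
        using good_prod_one[OF gF1 gG2, of x y M] x y M L0 B0 by (simp add: norm_mult mult_left_mono mult.assoc)
    qed (use rho L0 B0 in \<open>auto simp: e_def\<close>)
    have b6: "norm (u * ((qx*py - qy*px)*(B1*A2*(G1 y*F2 x - 1)))) \<le> Rb * (norm (B1*A2) * (L*B + L)) * M powr e"
      unfolding u_def
    proof (rule tb2[OF x(1) y(1) xy M(3,4) _ W2 _ Rb(1)])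
      show "norm (B1*A2*(G1 y*F2 x - 1)) \<le> norm (B1*A2) * (L*B + L) * M"
        using good_prod_one[OF gG1 gF2, of x y M] x y M L0 B0 by (simp add: norm_mult mult_left_mono mult.assoc)
    qed (use rho L0 B0 in \<open>auto simp: e_def\<close>)
    have "norm (of_real (sqrt (x*y)) * whittaker_kernel_offdiag z z' x y
        - rGamma z * rGamma z' * (A1*B2 - B1*A2) * ratio_raw z z' (x/y))
      \<le> norm c0 * (norm (A1*A2) * (2*L*B) * M powr e + norm (B1*B2) * (2*L*B) * M powr e
         + norm (A1*B2) * (2*L*B) * M powr e + Rb * (norm (A1*B2) * (L*B + L)) * M powr e
         + norm (B1*A2) * (2*L*B) * M powr e + Rb * (norm (B1*A2) * (L*B + L)) * M powr e)"
      unfolding ident norm_mult[of c0]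
      by (intro mult_left_mono order_trans[OF norm_triangle_ineq] add_mono b1 b2 b3 b4 b5 b6) auto
    also have "\<dots> = C * M powr e" by (simp add: C_def algebra_simps)
    finally show "norm (of_real (sqrt (x*y)) * whittaker_kernel_offdiag z z' x y
        - rGamma z * rGamma z' * (A1*B2 - B1*A2) * ratio_raw z z' (x/y))
      \<le> C * max x y powr (1 - 2*\<bar>\<rho>\<bar>)" by (simp add: M_def e_def)
  qed
qed



lemma gamma_alg:
  fixes rz rz' Gm Gp r1z r1z' z z' :: complex
  shows "rz * rz' * (Gm * (-z * r1z) * (Gp * r1z') - Gp * (-z' * r1z') * (Gm * r1z))
       = (rz * r1z) * (rz' * r1z') * (Gp * Gm) * (z' - z)"
  by (simp add: algebra_simps)

lemma gamma_id:
  fixes z z' :: complex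
  assumes "z \<noteq> z'"
  shows "rGamma z * rGamma z' * (Gamma (z' - z) * rGamma (-z) * (Gamma (z - z') * rGamma (1 - z'))
          - Gamma (z - z') * rGamma (-z') * (Gamma (z' - z) * rGamma (1 - z)))
       = sin (of_real pi * z) * sin (of_real pi * z') / (of_real pi * sin (of_real pi * (z - z')))"
proof -
  have r1: "rGamma (-z) = -z * rGamma (1 - z)" using rGamma_plus1[of "-z"] by (simp add: add.commute)
  have r2: "rGamma (-z') = -z' * rGamma (1 - z')" using rGamma_plus1[of "-z'"] by (simp add: add.commute)
  have g: "Gamma (z - z') * Gamma (z' - z) = - of_real pi / ((z - z') * sin (of_real pi * (z - z')))"
    using Gamma_reflection_complex'[of "z - z'"] by simp
  have "rGamma z * rGamma z' * (Gamma (z' - z) * rGamma (-z) * (Gamma (z - z') * rGamma (1 - z'))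
          - Gamma (z - z') * rGamma (-z') * (Gamma (z' - z) * rGamma (1 - z)))
      = (rGamma z * rGamma (1 - z)) * (rGamma z' * rGamma (1 - z')) * (Gamma (z - z') * Gamma (z' - z)) * (z' - z)"
    unfolding r1 r2 by (rule gamma_alg)
  also have "\<dots> = sin (of_real pi * z) / of_real pi * (sin (of_real pi * z') / of_real pi)
      * (- of_real pi / ((z - z') * sin (of_real pi * (z - z')))) * (z' - z)"
    unfolding g rGamma_reflection_complex ..
  also have "\<dots> = sin (of_real pi * z) * sin (of_real pi * z') / (of_real pi * sin (of_real pi * (z - z')))"
  proof (cases "sin (of_real pi * (z - z')) = 0")
    case True then show ?thesis by simp
  next
    case False
    have "z - z' \<noteq> 0" using assms by simp
    with False show ?thesis by (simp add: field_simps)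
  qed
  finally show ?thesis .
qed

lemma filterlim_of_real_at: "filterlim (of_real :: real \<Rightarrow> complex) (at (of_real x)) (at x)"
  unfolding filterlim_at
proof
  show "\<forall>\<^sub>F y in at x. (of_real y :: complex) \<in> UNIV \<and> of_real y \<noteq> of_real x"
    by (auto simp: eventually_at_filter)
  show "((of_real :: real \<Rightarrow> complex) \<longlongrightarrow> of_real x) (at x)"
    by (intro tendsto_intros)
qed

lemma real_deriv_limit:
  assumes "f holomorphic_on S" "open S" "(of_real x :: complex) \<in> S"
  shows "\<exists>D. ((\<lambda>y. (f (of_real y) - f (of_real x)) / (of_real y - of_real x)) \<longlongrightarrow> D) (at x)"
proof -
  obtain D where "(f has_field_derivative D) (at (of_real x))"
    using assms holomorphic_on_imp_differentiable_at field_differentiable_def by blast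
  then have "((\<lambda>w. (f w - f (of_real x)) / (w - of_real x)) \<longlongrightarrow> D) (at (of_real x))"
    using has_field_derivative_iff by blast
  from filterlim_compose[OF this filterlim_of_real_at]
  show ?thesis by (auto simp: o_def)
qed

definition Phi :: "complex \<Rightarrow> complex \<Rightarrow> complex \<Rightarrow> complex \<Rightarrow> complex \<Rightarrow> complex \<Rightarrow> complex \<Rightarrow> complex \<Rightarrow> complex" where
  "Phi A B m a b c d w = A * w powr m * Fc a b w + B * w powr (-m) * Fc c d w"

lemma Phi_holo: "Phi A B m a b c d holomorphic_on {w. 0 < Re w}"
  unfolding Phi_def by (intro holomorphic_intros Fc_holo) (auto simp: complex_nonpos_Reals_iff)

lemma phi1_Phi: "0 < x \<Longrightarrow> phi1 z z' x = Phi (Gamma (z' - z) * rGamma (-z)) (Gamma (z - z') * rGamma (-z')) ((z - z')/2)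
   (-z') (1 + (z - z')) (-z) (1 - (z - z')) (of_real x)"
  unfolding Phi_def phi1_repr by (simp add: mult.assoc)

lemma phi2_Phi: "0 < x \<Longrightarrow> phi2 z z' x = Phi (Gamma (z' - z) * rGamma (1 - z)) (Gamma (z - z') * rGamma (1 - z')) ((z - z')/2)
   (1 - z') (1 + (z - z')) (1 - z) (1 - (z - z')) (of_real x)"
  unfolding Phi_def phi2_repr by (simp add: mult.assoc)

lemma offdiag_limit:
  assumes x: "0 < x"
  shows "\<exists>K. (whittaker_kernel_offdiag z z' x \<longlongrightarrow> K) (at x)"
proof -
  define P1 where "P1 = Phi (Gamma (z' - z) * rGamma (-z)) (Gamma (z - z') * rGamma (-z')) ((z - z')/2)
   (-z') (1 + (z - z')) (-z) (1 - (z - z'))"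
  define P2 where "P2 = Phi (Gamma (z' - z) * rGamma (1 - z)) (Gamma (z - z') * rGamma (1 - z')) ((z - z')/2)
   (1 - z') (1 + (z - z')) (1 - z) (1 - (z - z'))"
  define g where "g = (\<lambda>w. P1 (of_real x) * P2 w - P1 w * P2 (of_real x))"
  have hol: "g holomorphic_on {w. 0 < Re w}" unfolding g_def P1_def P2_def
    by (intro holomorphic_intros Phi_holo)
  obtain D where D: "((\<lambda>y. (g (of_real y) - g (of_real x)) / (of_real y - of_real x)) \<longlongrightarrow> D) (at x)"
    using real_deriv_limit[OF hol open_halfspace_Re_gt] x by auto
  have g0: "g (of_real x) = 0" by (simp add: g_def)
  have ev: "\<forall>\<^sub>F y in at x. - (rGamma z * rGamma z') * ((g (of_real y) - g (of_real x)) / (of_real y - of_real x))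
      = whittaker_kernel_offdiag z z' x y"
  proof -
    have "\<forall>\<^sub>F y in at x. 0 < y" by (rule order_tendstoD(1)[OF tendsto_ident_at x])
    then show ?thesis
    proof (rule eventually_mono)
      fix y :: real assume y: "0 < y"
      have gy: "g (of_real y) = phi1 z z' x * phi2 z z' y - phi1 z z' y * phi2 z z' x"
        unfolding g_def phi1_Phi[OF x] phi1_Phi[OF y] phi2_Phi[OF x] phi2_Phi[OF y] P1_def P2_def ..
      have e: "(phi1 z z' x * phi2 z z' y - phi1 z z' y * phi2 z z' x) / (of_real x - of_real y)
          = - ((phi1 z z' x * phi2 z z' y - phi1 z z' y * phi2 z z' x) / (of_real y - of_real x))"
        by (metis minus_diff_eq divide_minus_right)
      show "- (rGamma z * rGamma z') * ((g (of_real y) - g (of_real x)) / (of_real y - of_real x))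
          = whittaker_kernel_offdiag z z' x y"
        unfolding whittaker_kernel_offdiag_def of_real_diff e g0 gy diff_zero by simp
    qed
  qed
  have "((\<lambda>y. - (rGamma z * rGamma z') * ((g (of_real y) - g (of_real x)) / (of_real y - of_real x)))
     \<longlongrightarrow> - (rGamma z * rGamma z') * D) (at x)"
    by (intro tendsto_intros D)
  then show ?thesis using tendsto_cong[OF ev] by blast
qed

lemma ratio_limit: "\<exists>R. (ratio_raw z z' \<longlongrightarrow> R) (at 1)"
proof -
  define h where "h = (\<lambda>w::complex. w powr ((z - z')/2) - w powr (-((z - z')/2)))"
  have hol: "h holomorphic_on {w. 0 < Re w}" unfolding h_def
    by (intro holomorphic_intros) (auto simp: complex_nonpos_Reals_iff)
  obtain D where D: "((\<lambda>t. (h (of_real t) - h (of_real 1)) / (of_real t - of_real 1)) \<longlongrightarrow> D) (at 1)"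
    using real_deriv_limit[OF hol open_halfspace_Re_gt, of 1] by auto
  have ev: "\<forall>\<^sub>F t in at (1::real). of_real (sqrt t) * ((h (of_real t) - h (of_real 1)) / (of_real t - of_real 1)) = ratio_raw z z' t"
  proof -
    have "\<forall>\<^sub>F t in at (1::real). 0 < t" by (rule order_tendstoD(1)[OF tendsto_ident_at zero_less_one])
    moreover have "\<forall>\<^sub>F t in at (1::real). t \<noteq> 1" by (simp add: eventually_at_filter)
    ultimately show ?thesis
    proof (rule eventually_elim2)
      fix t :: real assume t: "0 < t" "t \<noteq> 1"
      have m: "(z' - z)/2 = -((z-z')/2)" by (simp add: field_simps)
      have d: "(of_real t :: complex) powr (1/2) - of_real t powr (-1/2) = of_real ((t - 1) / sqrt t)"
      proof -
        have "sqrt t - 1 / sqrt t = (t - 1) / sqrt t" using t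
          by (simp add: field_simps del: real_sqrt_eq_iff; (metis less_imp_le real_sqrt_pow2 power2_eq_square)?)
        then show ?thesis unfolding cp_half[OF t(1)] cp_mhalf[OF t(1)] by (metis of_real_diff)
      qed
      have h1: "h 1 = 0" by (simp add: h_def)
      have rr: "ratio_raw z z' t = h (of_real t) / of_real ((t - 1) / sqrt t)"
        unfolding ratio_raw_def d m h_def ..
      have q: "(of_real ((t - 1) / sqrt t) :: complex) = (of_real t - 1) / of_real (sqrt t)" by simp
      show "of_real (sqrt t) * ((h (of_real t) - h (of_real 1)) / (of_real t - of_real 1)) = ratio_raw z z' t"
        unfolding rr q h1 of_real_1 diff_zero divide_divide_eq_right by (simp add: mult.commute)
    qed
  qed
  have "((\<lambda>t. of_real (sqrt t) * ((h (of_real t) - h (of_real 1)) / (of_real t - of_real 1))) \<longlongrightarrow> of_real (sqrt 1) * D) (at (1::real))"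
    by (intro tendsto_intros D)
  then show ?thesis using tendsto_cong[OF ev] by blast
qed



theorem proposition4p1p3:
  fixes z z' :: complex
  assumes "admissible z z'" and "z \<noteq> z'"
  shows "(\<forall>x y. x > 0 \<longrightarrow> y > 0 \<longrightarrow>
            whittaker_kernel z z' x y =
              (main_term z z' x y + r_prime z z' x y) / of_real (sqrt (x * y)))
       \<and> (z' = cnj z \<longrightarrow>
            (\<exists>C \<delta>. \<delta> > 0 \<and> (\<forall>x y. 0 < x \<longrightarrow> x < \<delta> \<longrightarrow> 0 < y \<longrightarrow> y < \<delta> \<longrightarrow>
               norm (r_prime z z' x y) \<le> C * max x y)))
       \<and> ((\<exists>m::int. z \<in> \<real> \<and> z' \<in> \<real> \<and> of_int m < Re z \<and> Re z < of_int m + 1 \<and>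
                    of_int m < Re z' \<and> Re z' < of_int m + 1) \<longrightarrow>
            (\<exists>C \<delta>. \<delta> > 0 \<and> (\<forall>x y. 0 < x \<longrightarrow> x < \<delta> \<longrightarrow> 0 < y \<longrightarrow> y < \<delta> \<longrightarrow>
               norm (r_prime z z' x y) \<le> C * max x y powr (1 - \<bar>Re z - Re z'\<bar>))))"
proof -
  define \<rho> where "\<rho> = Re ((z - z')/2)"
  have rre: "\<rho> = (Re z - Re z') / 2" by (simp add: \<rho>_def)
  have rho: "\<bar>\<rho>\<bar> \<le> 1/2"
    using assms(1) unfolding admissible_def
  proof (elim disjE conjE exE)
    assume "z' = cnj z" then show ?thesis by (simp add: \<rho>_def)
  next
    fix m :: int assume "of_int m < Re z" "Re z < of_int m + 1" "of_int m < Re z'" "Re z' < of_int m + 1"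
    then show ?thesis unfolding rre by (simp add: abs_le_iff; linarith)
  qed
  define \<kappa> where "\<kappa> = sin (of_real pi * z) * sin (of_real pi * z') / (of_real pi * sin (of_real pi * (z - z')))"
  obtain C where C: "\<forall>x y. 0 < x \<longrightarrow> x < 1 \<longrightarrow> 0 < y \<longrightarrow> y < 1 \<longrightarrow> x \<noteq> y \<longrightarrow>
     norm (of_real (sqrt (x*y)) * whittaker_kernel_offdiag z z' x y - \<kappa> * ratio_raw z z' (x/y))
     \<le> C * max x y powr (1 - 2*\<bar>\<rho>\<bar>)"
    using core_bound[of z z'] rho unfolding \<rho>_def \<kappa>_def gamma_id[OF assms(2)] by blast
  have off: "r_prime z z' x y = of_real (sqrt (x*y)) * whittaker_kernel_offdiag z z' x y - \<kappa> * ratio_raw z z' (x/y)"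
    if "0 < x" "0 < y" "x \<noteq> y" for x y
  proof -
    have "x / y \<noteq> 1" using that by simp
    then show ?thesis using that
      by (simp add: r_prime_def whittaker_kernel_def main_term_def ratio_fun_def \<kappa>_def)
  qed
  have bound: "norm (r_prime z z' x y) \<le> C * max x y powr (1 - 2*\<bar>\<rho>\<bar>)"
    if x: "0 < x" "x < 1" and y: "0 < y" "y < 1" for x y
  proof (cases "x = y")
    case False
    then show ?thesis using C x y off[OF x(1) y(1) False] by auto
  next
    case True
    obtain Kd where Kd: "(whittaker_kernel_offdiag z z' x \<longlongrightarrow> Kd) (at x)" using offdiag_limit[OF x(1)] by blast
    obtain R where R: "(ratio_raw z z' \<longlongrightarrow> R) (at 1)" using ratio_limit by blast
    have wk: "whittaker_kernel z z' x x = Kd" unfolding whittaker_kernel_def using Kd by (simp add: tendsto_Lim)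
    have rf: "ratio_fun z z' 1 = R" unfolding ratio_fun_def using R by (simp add: tendsto_Lim)
    have rpx: "r_prime z z' x x = of_real (sqrt (x*x)) * Kd - \<kappa> * R"
      using x by (simp add: r_prime_def wk main_term_def rf \<kappa>_def)
    have lim_div: "filterlim (\<lambda>y. x / y) (at 1) (at x)"
      unfolding filterlim_at
    proof
      show "\<forall>\<^sub>F y in at x. x / y \<in> UNIV \<and> x / y \<noteq> 1"
        unfolding eventually_at_filter
        by (intro always_eventually allI impI) (use x in \<open>auto simp: divide_eq_1_iff\<close>)
      have "((\<lambda>y. x / y) \<longlongrightarrow> x / x) (at x)" using x by (intro tendsto_intros) auto
      then show "((\<lambda>y. x / y) \<longlongrightarrow> 1) (at x)" using x by simp
    qed
    have l1: "((\<lambda>y. of_real (sqrt (x*y)) * whittaker_kernel_offdiag z z' x y - \<kappa> * ratio_raw z z' (x/y))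
        \<longlongrightarrow> r_prime z z' x x) (at x)"
      unfolding rpx
      by (intro tendsto_intros Kd filterlim_compose[OF R lim_div])
    have l2: "((\<lambda>y. C * max x y powr (1 - 2*\<bar>\<rho>\<bar>)) \<longlongrightarrow> C * max x x powr (1 - 2*\<bar>\<rho>\<bar>)) (at x)"
      using x by (intro tendsto_intros) auto
    have ev: "\<forall>\<^sub>F y in at x. norm (of_real (sqrt (x*y)) * whittaker_kernel_offdiag z z' x y - \<kappa> * ratio_raw z z' (x/y))
        \<le> C * max x y powr (1 - 2*\<bar>\<rho>\<bar>)"
    proof -
      have "\<forall>\<^sub>F y in at x. 0 < y" by (rule order_tendstoD(1)[OF tendsto_ident_at x(1)])
      moreover have "\<forall>\<^sub>F y in at x. y < 1" by (rule order_tendstoD(2)[OF tendsto_ident_at x(2)])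
      moreover have "\<forall>\<^sub>F y in at x. y \<noteq> x" by (simp add: eventually_at_filter)
      ultimately show ?thesis
        by eventually_elim (use C x in \<open>auto\<close>)
    qed
    have "norm (r_prime z z' x x) \<le> C * max x x powr (1 - 2*\<bar>\<rho>\<bar>)"
      by (rule tendsto_le[OF _ l2 tendsto_norm[OF l1] ev]) simp
    then show ?thesis using True by simp
  qed
  have c1: "\<forall>x y. x > 0 \<longrightarrow> y > 0 \<longrightarrow>
            whittaker_kernel z z' x y = (main_term z z' x y + r_prime z z' x y) / of_real (sqrt (x * y))"
  proof (intro allI impI)
    fix x y :: real assume "x > 0" "y > 0"
    then have "sqrt (x*y) \<noteq> 0" by simp
    then show "whittaker_kernel z z' x y = (main_term z z' x y + r_prime z z' x y) / of_real (sqrt (x * y))"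
      by (simp add: r_prime_def)
  qed
  have c2: "\<exists>C \<delta>. \<delta> > 0 \<and> (\<forall>x y. 0 < x \<longrightarrow> x < \<delta> \<longrightarrow> 0 < y \<longrightarrow> y < \<delta> \<longrightarrow>
               norm (r_prime z z' x y) \<le> C * max x y)" if "z' = cnj z"
  proof -
    have "\<rho> = 0" using that by (simp add: \<rho>_def)
    then show ?thesis using bound by (intro exI[of _ C] exI[of _ 1]) auto
  qed
  have c3: "\<exists>C \<delta>. \<delta> > 0 \<and> (\<forall>x y. 0 < x \<longrightarrow> x < \<delta> \<longrightarrow> 0 < y \<longrightarrow> y < \<delta> \<longrightarrow>
               norm (r_prime z z' x y) \<le> C * max x y powr (1 - \<bar>Re z - Re z'\<bar>))"
  proof -
    have "1 - 2*\<bar>\<rho>\<bar> = 1 - \<bar>Re z - Re z'\<bar>" unfolding rre by simp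
    then show ?thesis using bound by (intro exI[of _ C] exI[of _ 1]) auto
  qed
  show ?thesis using c1 c2 c3 by blast
qed

end
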